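(* For every $\mathrm{Sym}$-invariant lattice $L\subseteq\mathbb{Z}^{(\mathbb{N})}$, the monoid $M=L\cap\mathbb{Z}_{\ge0}^{(\mathbb{N})}$ has a finite equivariant Hilbert basis.
   Context: $\mathbb{N}=\{1,2,\dots\}$. $\mathbb{Z}^{(\mathbb{N})}$ is the group of finitely supported integer sequences (standard basis $\mathbf{e}_i$), $\mathbb{Z}_{\ge0}^{(\mathbb{N})}$ its nonnegative elements; a lattice is a subgroup. $\mathrm{Sym}$ is the group of permutations of $\mathbb{N}$ fixing all but finitely many points, acting by $\sigma(\mathbf{e}_i)=\mathbf{e}_{\sigma(i)}$. A Hilbert basis of a monoid is a minimal generating set w.r.t. $\mathbb{Z}_{\ge0}$-linear combinations; $\mathcal{H}\subseteq M$ is an equivariant Hilbert basis if $\mathrm{Sym}(\mathcal{H})=\{\sigma(\mathbf{h})\}$ is a Hilbert basis of $M$. *)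

theory Defs
  imports Main
begin

text \<open>Finitely supported integer sequences indexed by the positive naturals
  (coordinate 0 is required to be 0).\<close>
definition ZN :: "(nat \<Rightarrow> int) set" where
  "ZN = {v. v 0 = 0 \<and> finite {i. v i \<noteq> 0}}"

definition ZN_nonneg :: "(nat \<Rightarrow> int) set" where
  "ZN_nonneg = {v \<in> ZN. \<forall>i. v i \<ge> 0}"

definition is_lattice :: "(nat \<Rightarrow> int) set \<Rightarrow> bool" where
  "is_lattice L \<longleftrightarrow> L \<subseteq> ZN \<and> (\<lambda>i. 0) \<in> L \<and> (\<forall>u\<in>L. \<forall>v\<in>L. (\<lambda>i. u i + v i) \<in> L) \<and> (\<forall>v\<in>L. (\<lambda>i. - v i) \<in> L)"

definition Sym :: "(nat \<Rightarrow> nat) set" where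
  "Sym = {\<sigma>. bij_betw \<sigma> {1..} {1..} \<and> \<sigma> 0 = 0 \<and> finite {i. \<sigma> i \<noteq> i}}"

text \<open>Action with sigma(e_i) = e_(sigma i).\<close>
definition act :: "(nat \<Rightarrow> nat) \<Rightarrow> (nat \<Rightarrow> int) \<Rightarrow> (nat \<Rightarrow> int)" where
  "act \<sigma> v = (\<lambda>i. v (inv \<sigma> i))"

definition sym_invariant :: "(nat \<Rightarrow> int) set \<Rightarrow> bool" where
  "sym_invariant L \<longleftrightarrow> (\<forall>\<sigma>\<in>Sym. \<forall>v\<in>L. act \<sigma> v \<in> L)"

definition orbit_set :: "(nat \<Rightarrow> int) set \<Rightarrow> (nat \<Rightarrow> int) set" where
  "orbit_set H = {act \<sigma> h | \<sigma> h. \<sigma> \<in> Sym \<and> h \<in> H}"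

definition nn_span :: "(nat \<Rightarrow> int) set \<Rightarrow> (nat \<Rightarrow> int) set" where
  "nn_span B = {v. \<exists>F c. finite F \<and> F \<subseteq> B \<and>
      v = (\<lambda>i. \<Sum>b\<in>F. int (c b) * b i)}"

definition hilbert_basis :: "(nat \<Rightarrow> int) set \<Rightarrow> (nat \<Rightarrow> int) set \<Rightarrow> bool" where
  "hilbert_basis M B \<longleftrightarrow> B \<subseteq> M \<and> nn_span B = M \<and> (\<forall>B'. B' \<subset> B \<longrightarrow> nn_span B' \<noteq> M)"

definition equivariant_hilbert_basis :: "(nat \<Rightarrow> int) set \<Rightarrow> (nat \<Rightarrow> int) set \<Rightarrow> bool" where
  "equivariant_hilbert_basis M H \<longleftrightarrow> H \<subseteq> M \<and> hilbert_basis M (orbit_set H)"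

end

theory Submission
  imports Defs
begin


definition tr :: "nat \<Rightarrow> nat \<Rightarrow> nat \<Rightarrow> nat" where
  "tr i j x = (if x = i then j else if x = j then i else x)"

lemma tr_invol[simp]: "tr i j (tr i j x) = x"
  by (auto simp: tr_def)

lemma bij_tr: "bij (tr i j)"
  unfolding bij_def inj_def surj_def by (metis tr_invol)

lemma inv_tr: "inv (tr i j) = tr i j"
  by (rule inv_equality) simp_all

lemma tr_Sym: "i \<ge> 1 \<Longrightarrow> j \<ge> 1 \<Longrightarrow> tr i j \<in> Sym"
proof -
  assume a: "i \<ge> 1" "j \<ge> 1"
  have "bij_betw (tr i j) {1..} {1..}"
    unfolding bij_betw_def inj_on_def
  proof (intro conjI ballI impI)
    show "\<And>x y. tr i j x = tr i j y \<Longrightarrow> x = y" by (metis tr_invol)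
    show "tr i j ` {1..} = {1..}"
    proof
      show "tr i j ` {1..} \<subseteq> {1..}" using a by (auto simp: tr_def)
      show "{1..} \<subseteq> tr i j ` {1..}"
      proof
        fix x :: nat assume "x \<in> {1..}"
        hence "tr i j x \<in> {1..}" using a by (auto simp: tr_def)
        thus "x \<in> tr i j ` {1..}" by (metis image_eqI tr_invol)
      qed
    qed
  qed
  moreover have "tr i j 0 = 0" using a by (auto simp: tr_def)
  moreover have "{x. tr i j x \<noteq> x} \<subseteq> {i, j}" by (auto simp: tr_def)
  hence "finite {x. tr i j x \<noteq> x}" by (meson finite.emptyI finite_insert finite_subset)
  ultimately show ?thesis unfolding Sym_def by blast
qed

lemma Sym_bij: assumes "\<sigma> \<in> Sym" shows "bij \<sigma>"
proof -
  have b: "bij_betw \<sigma> {1..} {1..}" and z: "\<sigma> 0 = 0" using assms by (auto simp: Sym_def)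
  have "inj \<sigma>"
  proof (rule injI)
    fix x y assume e: "\<sigma> x = \<sigma> y"
    show "x = y"
    proof (cases "x = 0 \<or> y = 0")
      case True
      have img: "\<And>t::nat. t \<ge> 1 \<Longrightarrow> \<sigma> t \<ge> 1" using b unfolding bij_betw_def by auto
      show ?thesis
      proof (cases "x = 0")
        case True
        then show ?thesis using e z img[of y] by (cases "y = 0") auto
      next
        case False
        then show ?thesis using True e z img[of x] by auto
      qed
    next
      case False
      then show ?thesis using e b unfolding bij_betw_def inj_on_def by auto
    qed
  qed
  moreover have "surj \<sigma>"
  proof -
    have "\<And>y. y \<in> range \<sigma>"
    proof -
      fix y :: nat
      show "y \<in> range \<sigma>"
      proof (cases "y = 0")
        case True thus ?thesis using z by (metis rangeI)
      next
        case False
        hence "y \<in> \<sigma> ` {1..}" using b unfolding bij_betw_def by auto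
        thus ?thesis by blast
      qed
    qed
    thus ?thesis by blast
  qed
  ultimately show ?thesis by (simp add: bij_def)
qed

lemma Sym_inv: assumes "\<sigma> \<in> Sym" shows "inv \<sigma> \<in> Sym"
proof -
  have bj: "bij \<sigma>" by (rule Sym_bij[OF assms])
  have b: "bij_betw \<sigma> {1..} {1..}" and z: "\<sigma> 0 = 0" and f: "finite {i. \<sigma> i \<noteq> i}"
    using assms by (auto simp: Sym_def)
  have "bij_betw (inv \<sigma>) {1..} {1..}"
    using bij_betw_inv_into_subset[of \<sigma> UNIV UNIV "{1..}" "{1..}"] bj b unfolding bij_betw_def by auto
  moreover have "inv \<sigma> 0 = 0" using z bj bij_inv_eq_iff by metis
  moreover have "{i. inv \<sigma> i \<noteq> i} \<subseteq> \<sigma> ` {i. \<sigma> i \<noteq> i}"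
  proof
    fix i assume "i \<in> {i. inv \<sigma> i \<noteq> i}"
    hence "\<sigma> (inv \<sigma> i) \<noteq> inv \<sigma> i" using bj by (simp add: bij_is_surj surj_f_inv_f)
    moreover have "i = \<sigma> (inv \<sigma> i)" using bj by (simp add: bij_is_surj surj_f_inv_f)
    ultimately show "i \<in> \<sigma> ` {i. \<sigma> i \<noteq> i}" by blast
  qed
  hence "finite {i. inv \<sigma> i \<noteq> i}" using f finite_subset by blast
  ultimately show ?thesis unfolding Sym_def by blast
qed

lemma Sym_comp: assumes "\<sigma> \<in> Sym" "\<tau> \<in> Sym" shows "\<sigma> \<circ> \<tau> \<in> Sym"
proof -
  have "bij_betw (\<sigma> \<circ> \<tau>) {1..} {1..}" using assms by (auto simp: Sym_def intro: bij_betw_trans)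
  moreover have "(\<sigma> \<circ> \<tau>) 0 = 0" using assms by (auto simp: Sym_def)
  moreover have "{i. (\<sigma> \<circ> \<tau>) i \<noteq> i} \<subseteq> {i. \<sigma> i \<noteq> i} \<union> {i. \<tau> i \<noteq> i}" by auto
  hence "finite {i. (\<sigma> \<circ> \<tau>) i \<noteq> i}" using assms by (auto simp: Sym_def intro: finite_subset)
  ultimately show ?thesis unfolding Sym_def by blast
qed

lemma act_comp: assumes "\<sigma> \<in> Sym" "\<tau> \<in> Sym" shows "act \<tau> (act \<sigma> h) = act (\<tau> \<circ> \<sigma>) h"
  using assms by (simp add: act_def o_inv_distrib Sym_bij)

lemma act_id: "act id h = h" by (simp add: act_def)

lemma act_inv_act: assumes "\<sigma> \<in> Sym" shows "act (inv \<sigma>) (act \<sigma> h) = h"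
  using assms by (simp add: act_comp Sym_inv Sym_bij act_id inv_o_cancel bij_is_inj)

lemma act_act_inv: assumes "\<sigma> \<in> Sym" shows "act \<sigma> (act (inv \<sigma>) h) = h"
  proof -
  have "\<sigma> \<circ> inv \<sigma> = id" using assms by (simp add: surj_iff[THEN iffD1] bij_is_surj Sym_bij)
  thus ?thesis using assms by (simp add: act_comp Sym_inv act_id)
qed



definition supp :: "(nat \<Rightarrow> int) \<Rightarrow> nat set" where "supp v = {i. v i \<noteq> 0}"
definition tot :: "(nat \<Rightarrow> int) \<Rightarrow> int" where "tot v = sum v (supp v)"
definition E :: "nat \<Rightarrow> nat \<Rightarrow> int \<Rightarrow> nat \<Rightarrow> int" where
  "E i j a k = (if k = i then a else if k = j then -a else 0)"

lemma ZN_D: "v \<in> ZN \<Longrightarrow> v 0 = 0 \<and> finite (supp v)"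
  by (simp add: ZN_def supp_def)

lemma ZN_I: "v 0 = 0 \<Longrightarrow> finite (supp v) \<Longrightarrow> v \<in> ZN"
  by (simp add: ZN_def supp_def)

lemma tot_eq: assumes "finite A" "supp v \<subseteq> A" shows "tot v = sum v A"
  unfolding tot_def by (rule sum.mono_neutral_left) (use assms in \<open>auto simp: supp_def\<close>)

lemma tot_add: assumes "finite (supp u)" "finite (supp v)"
  shows "tot (\<lambda>i. u i + v i) = tot u + tot v"
proof -
  let ?A = "supp u \<union> supp v"
  have "tot (\<lambda>i. u i + v i) = (\<Sum>i\<in>?A. u i + v i)"
    by (rule tot_eq) (use assms in \<open>auto simp: supp_def\<close>)
  also have "\<dots> = sum u ?A + sum v ?A" by (simp add: sum.distrib)
  also have "sum u ?A = tot u" by (rule tot_eq[symmetric]) (use assms in auto)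
  also have "sum v ?A = tot v" by (rule tot_eq[symmetric]) (use assms in auto)
  finally show ?thesis .
qed

lemma tot_neg: "tot (\<lambda>i. - v i) = - tot v"
  by (simp add: tot_def supp_def sum_negf)

lemma tot_diff: assumes "finite (supp u)" "finite (supp v)"
  shows "tot (\<lambda>i. u i - v i) = tot u - tot v"
proof -
  have "finite (supp (\<lambda>i. - v i))" using assms by (simp add: supp_def)
  hence "tot (\<lambda>i. u i + - v i) = tot u + tot (\<lambda>i. - v i)" using assms tot_add by blast
  thus ?thesis by (simp add: tot_neg)
qed

lemma tot_zero[simp]: "tot (\<lambda>i. 0) = 0" by (simp add: tot_def)

lemma entry_le_tot: assumes "finite (supp v)" "\<forall>i. v i \<ge> 0" shows "v i \<le> tot v"
proof (cases "i \<in> supp v")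
  case True
  then show ?thesis unfolding tot_def using assms by (intro member_le_sum) auto
next
  case False
  hence "v i = 0" by (simp add: supp_def)
  then show ?thesis using assms by (simp add: tot_def sum_nonneg)
qed

lemma tot_pos: assumes "finite (supp v)" "\<forall>i. v i \<ge> 0" "v \<noteq> (\<lambda>i. 0)" shows "tot v > 0"
proof -
  obtain i where "v i \<noteq> 0" using assms(3) by auto
  hence "v i > 0" using assms(2) by (simp add: order_less_le)
  thus ?thesis using entry_le_tot[OF assms(1,2), of i] by simp
qed

lemma card_supp_le_tot: assumes "finite (supp v)" "\<forall>i. v i \<ge> 0" shows "int (card (supp v)) \<le> tot v"
proof -
  have "int (card (supp v)) = (\<Sum>i\<in>supp v. 1)" by simp
  also have "\<dots> \<le> (\<Sum>i\<in>supp v. v i)"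
  proof (rule sum_mono)
    fix i assume "i \<in> supp v"
    thus "1 \<le> v i" using assms(2)[rule_format, of i] by (simp add: supp_def)
  qed
  finally show ?thesis by (simp add: tot_def)
qed

lemma lat_add: "is_lattice L \<Longrightarrow> u \<in> L \<Longrightarrow> v \<in> L \<Longrightarrow> (\<lambda>i. u i + v i) \<in> L"
  by (simp add: is_lattice_def)
lemma lat_neg: "is_lattice L \<Longrightarrow> v \<in> L \<Longrightarrow> (\<lambda>i. - v i) \<in> L"
  by (simp add: is_lattice_def)
lemma lat_zero: "is_lattice L \<Longrightarrow> (\<lambda>i. 0) \<in> L"
  by (simp add: is_lattice_def)
lemma lat_ZN: "is_lattice L \<Longrightarrow> v \<in> L \<Longrightarrow> v \<in> ZN"
  by (auto simp: is_lattice_def)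
lemma lat_diff: "is_lattice L \<Longrightarrow> u \<in> L \<Longrightarrow> v \<in> L \<Longrightarrow> (\<lambda>i. u i - v i) \<in> L"
  using lat_add[of L u "\<lambda>i. - v i"] lat_neg[of L v] by simp

lemma lat_nat_mult: assumes "is_lattice L" "v \<in> L" shows "(\<lambda>i. int n * v i) \<in> L"
proof (induction n)
  case 0 then show ?case using lat_zero[OF assms(1)] by simp
next
  case (Suc n)
  have "(\<lambda>i. int n * v i + v i) \<in> L" using lat_add[OF assms(1) Suc assms(2)] .
  then show ?case by (simp add: algebra_simps)
qed

lemma lat_int_mult: assumes "is_lattice L" "v \<in> L" shows "(\<lambda>i. k * v i) \<in> L"
proof (cases "k \<ge> 0")
  case True
  then show ?thesis using lat_nat_mult[OF assms, of "nat k"] by simp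
next
  case False
  have "(\<lambda>i. - (int (nat (-k)) * v i)) \<in> L" using lat_neg[OF assms(1) lat_nat_mult[OF assms, of "nat (-k)"]] .
  then show ?thesis using False by simp
qed

lemma lat_sum: assumes "is_lattice L" "finite F" "\<forall>x\<in>F. f x \<in> L"
  shows "(\<lambda>i. \<Sum>x\<in>F. f x i) \<in> L"
  using assms(2,3)
proof (induction F rule: finite_induct)
  case empty then show ?case using lat_zero[OF assms(1)] by simp
next
  case (insert x F)
  have "(\<lambda>i. f x i + (\<Sum>x\<in>F. f x i)) \<in> L" using lat_add[OF assms(1)] insert by simp
  then show ?case using insert by simp
qed



lemma act_tr: "act (tr i j) v = (\<lambda>x. v (tr i j x))"
  by (simp add: act_def inv_tr)

lemma E_from_v: assumes "is_lattice L" "sym_invariant L" "v \<in> L" "i \<ge> 1" "j \<ge> 1" "i \<noteq> j"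
  shows "E i j (v i - v j) \<in> L"
proof -
  have "act (tr i j) v \<in> L" using assms tr_Sym unfolding sym_invariant_def by blast
  hence "(\<lambda>x. v x - act (tr i j) v x) \<in> L" using lat_diff[OF assms(1) assms(3)] by blast
  moreover have "(\<lambda>x. v x - act (tr i j) v x) = E i j (v i - v j)"
    using assms(6) by (auto simp: act_tr E_def tr_def)
  ultimately show ?thesis by simp
qed

lemma act_tr_E: assumes "i \<noteq> j" shows "act (tr p q) (E i j a) = E (tr p q i) (tr p q j) a"
proof
  fix k
  have "tr p q k = i \<longleftrightarrow> k = tr p q i" by (metis tr_invol)
  moreover have "tr p q k = j \<longleftrightarrow> k = tr p q j" by (metis tr_invol)
  ultimately show "act (tr p q) (E i j a) k = E (tr p q i) (tr p q j) a k"
    by (simp add: act_tr E_def)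
qed

lemma E_move: assumes "is_lattice L" "sym_invariant L" "E i j a \<in> L" "i \<ge> 1" "j \<ge> 1" "i \<noteq> j"
  "k \<ge> 1" "l \<ge> 1" "k \<noteq> l"
  shows "E k l a \<in> L"
proof -
  define m where "m = tr i k j"
  have tik: "tr i k i = k" by (simp add: tr_def)
  have mk: "m \<noteq> k" using assms(6) unfolding m_def by (metis tik tr_invol)
  have m1: "m \<ge> 1" using assms unfolding m_def tr_def by auto
  have "act (tr i k) (E i j a) \<in> L" using assms tr_Sym unfolding sym_invariant_def by blast
  hence L1: "E k m a \<in> L" using act_tr_E[OF assms(6)] tik m_def by simp
  have "act (tr m l) (E k m a) \<in> L" using L1 assms m1 tr_Sym unfolding sym_invariant_def by blast
  moreover have "act (tr m l) (E k m a) = E k l a"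
    using act_tr_E[of k m m l a] mk assms(9) by (simp add: tr_def)
  ultimately show ?thesis by simp
qed

lemma E_add: "E i j (a + b) = (\<lambda>k. E i j a k + E i j b k)"
  by (auto simp: E_def)

lemma E_mult: "E i j (c * a) = (\<lambda>k. c * E i j a k)"
  by (auto simp: E_def)

lemma E_diff: "E i j (a - b) = (\<lambda>k. E i j a k - E i j b k)"
  by (auto simp: E_def)

lemma entry_G: assumes "is_lattice L" "sym_invariant L" "v \<in> L" "i \<ge> 1"
  shows "E 1 2 (v i) \<in> L"
proof -
  have "finite (supp v)" using ZN_D lat_ZN assms by blast
  define j where "j = Suc (Max (insert i (supp v)))"
  have "j \<notin> supp v"
  proof
    assume "j \<in> supp v"
    hence "j \<le> Max (insert i (supp v))" using \<open>finite (supp v)\<close> by simp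
    thus False unfolding j_def by simp
  qed
  hence "v j = 0" unfolding supp_def by simp
  have "i \<le> Max (insert i (supp v))" using \<open>finite (supp v)\<close> by simp
  hence "j \<noteq> i" "j \<ge> 1" unfolding j_def by auto
  moreover have "E i j (v i - v j) \<in> L" using E_from_v assms \<open>j \<noteq> i\<close> \<open>j \<ge> 1\<close> by simp
  ultimately have "E i j (v i) \<in> L" using \<open>v j = 0\<close> by simp
  thus ?thesis using E_move[OF assms(1,2)] assms \<open>j \<noteq> i\<close> \<open>j \<ge> 1\<close> by simp
qed

lemma int_subgroup:
  fixes S :: "int set"
  assumes "a \<in> S" "a \<noteq> 0" "\<And>x y. x \<in> S \<Longrightarrow> y \<in> S \<Longrightarrow> x - y \<in> S" "\<And>x k. x \<in> S \<Longrightarrow> k * x \<in> S"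
  shows "\<exists>d>0. d \<in> S \<and> (\<forall>x\<in>S. d dvd x)"
proof -
  let ?P = "\<lambda>n::nat. 0 < n \<and> int n \<in> S"
  have "sgn a * a \<in> S" using assms by blast
  moreover have "sgn a * a = \<bar>a\<bar>" by (simp add: abs_sgn mult.commute)
  ultimately have "\<bar>a\<bar> \<in> S" by simp
  hence "?P (nat \<bar>a\<bar>)" using assms(2) by simp
  hence Pn: "?P (LEAST n. ?P n)" by (rule LeastI)
  define d where "d = int (LEAST n. ?P n)"
  have "d > 0" "d \<in> S" using Pn d_def by auto
  moreover have "\<forall>x\<in>S. d dvd x"
  proof
    fix x assume x: "x \<in> S"
    have "(x div d) * d \<in> S" using assms(4) \<open>d \<in> S\<close> by blast
    hence "x - (x div d) * d \<in> S" using assms(3) x by blast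
    hence r: "x mod d \<in> S" by (simp add: minus_div_mult_eq_mod)
    have r0: "0 \<le> x mod d" "x mod d < d" using \<open>d > 0\<close> by auto
    show "d dvd x"
    proof (rule ccontr)
      assume "\<not> d dvd x"
      hence "x mod d \<noteq> 0" by (simp add: dvd_eq_mod_eq_0)
      hence "?P (nat (x mod d))" using r r0 by simp
      hence "(LEAST n. ?P n) \<le> nat (x mod d)" by (rule Least_le)
      thus False using r0 d_def by linarith
    qed
  qed
  ultimately show ?thesis by blast
qed

lemma get_d: assumes "is_lattice L" "sym_invariant L" "u \<in> L" "u i \<noteq> 0"
  shows "\<exists>d>0. (\<forall>v\<in>L. \<forall>k. d dvd v k) \<and> (\<forall>k l c. k \<ge> 1 \<longrightarrow> l \<ge> 1 \<longrightarrow> k \<noteq> l \<longrightarrow> E k l (c * d) \<in> L)"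
proof -
  let ?S = "{a. E 1 2 a \<in> L}"
  have i1: "i \<ge> 1" using assms lat_ZN ZN_D by (metis less_one linorder_not_le)
  have "u i \<in> ?S" using entry_G assms i1 by blast
  moreover have "\<And>x y. x \<in> ?S \<Longrightarrow> y \<in> ?S \<Longrightarrow> x - y \<in> ?S"
    using lat_diff[OF assms(1)] by (simp add: E_diff)
  moreover have "\<And>x k. x \<in> ?S \<Longrightarrow> k * x \<in> ?S"
    using lat_int_mult[OF assms(1)] by (simp add: E_mult)
  ultimately obtain d where d: "d > 0" "d \<in> ?S" "\<forall>x\<in>?S. d dvd x"
    using int_subgroup[of "u i" ?S] assms(4) by blast
  have "\<forall>v\<in>L. \<forall>k. d dvd v k"
  proof (intro ballI allI)
    fix v k assume v: "v \<in> L"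
    show "d dvd v k"
    proof (cases "k = 0")
      case True
      have "v 0 = 0" using ZN_D lat_ZN[OF assms(1) v] by blast
      then show ?thesis using True by simp
    next
      case False
      then show ?thesis using entry_G[OF assms(1,2) v, of k] d by simp
    qed
  qed
  moreover have "\<forall>k l c. k \<ge> 1 \<longrightarrow> l \<ge> 1 \<longrightarrow> k \<noteq> l \<longrightarrow> E k l (c * d) \<in> L"
  proof (intro allI impI)
    fix k l :: nat and c :: int assume kl: "k \<ge> 1" "l \<ge> 1" "k \<noteq> l"
    have "E 1 2 (c * d) \<in> L" using lat_int_mult[OF assms(1), of "E 1 2 d" c] d by (simp add: E_mult)
    thus "E k l (c * d) \<in> L" using E_move[OF assms(1,2)] kl by simp
  qed
  ultimately show ?thesis using d by blast
qed



lemma sum0_in_L: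
  assumes "is_lattice L" "\<forall>k l c. k \<ge> 1 \<longrightarrow> l \<ge> 1 \<longrightarrow> k \<noteq> l \<longrightarrow> E k l (c * d) \<in> L"
    "x \<in> ZN" "tot x = 0" "\<forall>i. d dvd x i"
  shows "x \<in> L"
proof -
  have x0: "x 0 = 0" and fin: "finite (supp x)" using ZN_D[OF assms(3)] by auto
  define F where "F = supp x - {1}"
  have finF: "finite F" using fin F_def by simp
  have n1F: "1 \<notin> F" by (simp add: F_def)
  have each: "\<forall>i\<in>F. E i 1 (x i) \<in> L"
  proof
    fix i assume iF: "i \<in> F"
    have "i \<noteq> 1" using iF by (simp add: F_def)
    moreover have "i \<noteq> 0" using iF x0 unfolding F_def supp_def by (cases i) auto
    ultimately have "i \<noteq> 0" "i \<noteq> 1" by auto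
    have xeq: "x i div d * d = x i" using assms(5) by simp
    have "1 \<le> i" using \<open>i \<noteq> 0\<close> by simp
    hence "E i 1 (x i div d * d) \<in> L" using assms(2) \<open>i \<noteq> 1\<close> by blast
    thus "E i 1 (x i) \<in> L" using xeq by simp
  qed
  have Ls: "(\<lambda>k. \<Sum>i\<in>F. E i 1 (x i) k) \<in> L" using lat_sum[OF assms(1) finF each] .
  have "(\<lambda>k. \<Sum>i\<in>F. E i 1 (x i) k) = x"
  proof
    fix k
    show "(\<Sum>i\<in>F. E i 1 (x i) k) = x k"
    proof (cases "k = 1")
      case True
      have "(\<Sum>i\<in>F. E i 1 (x i) k) = (\<Sum>i\<in>F. - x i)" using True F_def by (intro sum.cong) (auto simp: E_def)
      also have "\<dots> = - sum x F" by (simp add: sum_negf)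
      finally have 1: "(\<Sum>i\<in>F. E i 1 (x i) k) = - sum x F" .
      have "tot x = sum x (insert 1 F)" by (rule tot_eq) (auto simp: F_def fin)
      also have "\<dots> = x 1 + sum x F" using finF n1F by simp
      finally have "x 1 + sum x F = 0" using assms(4) by simp
      then show ?thesis using 1 True by simp
    next
      case False
      have "(\<Sum>i\<in>F. E i 1 (x i) k) = (\<Sum>i\<in>F. if k = i then x i else 0)" using False by (intro sum.cong) (auto simp: E_def)
      also have "\<dots> = (if k \<in> F then x k else 0)" using finF by simp
      also have "\<dots> = x k" using False by (auto simp: F_def supp_def)
      finally show ?thesis .
    qed
  qed
  thus ?thesis using Ls by simp
qed

lemma greedy:
  assumes "d > 0" "v \<in> ZN" "\<forall>i. 0 \<le> v i" "\<forall>i. d dvd v i" "int n * d \<le> tot v"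
  shows "\<exists>w\<in>ZN. (\<forall>i. 0 \<le> w i \<and> w i \<le> v i \<and> d dvd w i) \<and> tot w = int n * d"
  using assms(5)
proof (induction n)
  case 0
  have "(\<lambda>i. 0::int) \<in> ZN" by (rule ZN_I) (auto simp: supp_def)
  then show ?case using assms(3) by (intro bexI[of _ "\<lambda>i. 0"]) auto
next
  case (Suc n)
  have "int n * d \<le> tot v" using Suc.prems assms(1) by (simp add: algebra_simps)
  then obtain w where w: "w \<in> ZN" "\<forall>i. 0 \<le> w i \<and> w i \<le> v i \<and> d dvd w i" "tot w = int n * d"
    using Suc.IH by blast
  have "\<exists>i. w i < v i"
  proof (rule ccontr)
    assume "\<not> (\<exists>i. w i < v i)"
    hence "w = v" using w(2) by (intro ext) (meson order.antisym not_less)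
    hence "tot w = tot v" by simp
    thus False using Suc.prems w(3) assms(1) by (simp add: algebra_simps)
  qed
  then obtain i where i: "w i < v i" by blast
  have "d dvd v i - w i" using assms(4) w(2) by (simp add: dvd_diff)
  hence dle: "d \<le> v i - w i" using i by (simp add: zdvd_imp_le)
  have v0: "v 0 = 0" using ZN_D[OF assms(2)] by simp
  have i0: "i \<noteq> 0" using i v0 w(2) by (metis not_less)
  define e where "e = (\<lambda>k. if k = i then d else (0::int))"
  define w' where "w' = (\<lambda>k. w k + e k)"
  have finw: "finite (supp w)" using ZN_D[OF w(1)] by simp
  have fine: "finite (supp e)" by (rule finite_subset[of _ "{i}"]) (auto simp: supp_def e_def)
  have "w' \<in> ZN"
  proof (rule ZN_I)
    show "w' 0 = 0" using ZN_D[OF w(1)] i0 by (simp add: w'_def e_def)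
    have "supp w' \<subseteq> supp w \<union> supp e" by (auto simp: supp_def w'_def)
    thus "finite (supp w')" using finw fine finite_subset by blast
  qed
  moreover have "\<forall>k. 0 \<le> w' k \<and> w' k \<le> v k \<and> d dvd w' k"
    using w(2) dle assms(1) by (auto simp: w'_def e_def)
  moreover have "tot w' = tot w + tot e" unfolding w'_def by (rule tot_add[OF finw fine])
  moreover have "tot e = d" by (subst tot_eq[of "{i}"]) (auto simp: supp_def e_def)
  ultimately show ?case using w(3) by (intro bexI[of _ w']) (auto simp: algebra_simps)
qed

definition atoms :: "(nat \<Rightarrow> int) set \<Rightarrow> (nat \<Rightarrow> int) set" where
  "atoms M = {v \<in> M. v \<noteq> (\<lambda>i. 0) \<and> (\<forall>w\<in>M. (\<forall>i. w i \<le> v i) \<longrightarrow> w = (\<lambda>i. 0) \<or> w = v)}"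

lemma atom_bound:
  assumes "is_lattice L" "sym_invariant L" "u \<in> L" "tot u > 0" "v \<in> atoms (L \<inter> ZN_nonneg)"
  shows "tot v \<le> tot u"
proof (rule ccontr)
  assume "\<not> tot v \<le> tot u"
  hence gt: "tot u < tot v" by simp
  have "u \<noteq> (\<lambda>i. 0)" using assms(4) by auto
  then obtain i where "u i \<noteq> 0" by auto
  then obtain d where d: "d > 0" and dv: "\<forall>v\<in>L. \<forall>k. d dvd v k"
    and mv: "\<forall>k l c. k \<ge> 1 \<longrightarrow> l \<ge> 1 \<longrightarrow> k \<noteq> l \<longrightarrow> E k l (c * d) \<in> L"
    using get_d[OF assms(1,2,3)] by blast
  have "d dvd tot u" unfolding tot_def using dv assms(3) by (simp add: dvd_sum)
  hence tu: "tot u = (tot u div d) * d" by simp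
  have "tot u div d \<ge> 0" using assms(4) d by (simp add: pos_imp_zdiv_nonneg_iff)
  then obtain n where n: "tot u div d = int n" by (metis nonneg_int_cases)
  have vM: "v \<in> L" "v \<in> ZN" "\<forall>i. 0 \<le> v i" "v \<noteq> (\<lambda>i. 0)"
    and vat: "\<forall>w\<in>L \<inter> ZN_nonneg. (\<forall>i. w i \<le> v i) \<longrightarrow> w = (\<lambda>i. 0) \<or> w = v"
    using assms(5) by (auto simp: atoms_def ZN_nonneg_def)
  have "int n * d \<le> tot v" using gt tu n by simp
  then obtain w where w: "w \<in> ZN" "\<forall>i. 0 \<le> w i \<and> w i \<le> v i \<and> d dvd w i" "tot w = int n * d"
    using greedy[OF d vM(2,3)] dv vM(1) by blast
  have twu: "tot w = tot u" using w(3) tu n by simp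
  have uZN: "u \<in> ZN" using lat_ZN assms by blast
  define x where "x = (\<lambda>k. w k - u k)"
  have finw: "finite (supp w)" and finu: "finite (supp u)" using ZN_D w(1) uZN by auto
  have "x \<in> ZN"
  proof (rule ZN_I)
    show "x 0 = 0" using ZN_D[OF w(1)] ZN_D[OF uZN] by (simp add: x_def)
    have "supp x \<subseteq> supp w \<union> supp u" by (auto simp: supp_def x_def)
    thus "finite (supp x)" using finw finu finite_subset by blast
  qed
  moreover have "tot x = 0" unfolding x_def using tot_diff[OF finw finu] twu by simp
  moreover have "\<forall>k. d dvd x k" using w(2) dv assms(3) by (simp add: x_def dvd_diff)
  ultimately have "x \<in> L" using sum0_in_L[OF assms(1) mv] by blast
  hence "(\<lambda>k. x k + u k) \<in> L" using lat_add[OF assms(1) _ assms(3)] by blast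
  hence wL: "w \<in> L" by (simp add: x_def)
  have "w \<in> L \<inter> ZN_nonneg" using wL w by (auto simp: ZN_nonneg_def)
  hence "w = (\<lambda>i. 0) \<or> w = v" using vat w(2) by blast
  thus False using twu assms(4) gt by auto
qed

lemma atoms_bounded: assumes "is_lattice L" "sym_invariant L"
  shows "\<exists>s::nat. \<forall>v\<in>atoms (L \<inter> ZN_nonneg). tot v \<le> int s"
proof (cases "\<exists>u\<in>L. tot u \<noteq> 0")
  case True
  then obtain u where u: "u \<in> L" "tot u \<noteq> 0" by blast
  have "\<exists>u'\<in>L. tot u' > 0"
  proof (cases "tot u > 0")
    case True then show ?thesis using u by blast
  next
    case False
    hence "tot (\<lambda>i. - u i) > 0" using u by (simp add: tot_neg)
    then show ?thesis using lat_neg[OF assms(1) u(1)] by blast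
  qed
  then obtain u' where "u' \<in> L" "tot u' > 0" by blast
  then show ?thesis using atom_bound[OF assms] by (intro exI[of _ "nat (tot u')"]) auto
next
  case False
  have "atoms (L \<inter> ZN_nonneg) = {}"
  proof (rule ccontr)
    assume "atoms (L \<inter> ZN_nonneg) \<noteq> {}"
    then obtain v where v: "v \<in> atoms (L \<inter> ZN_nonneg)" by blast
    hence "v \<in> L" "v \<in> ZN" "\<forall>i. 0 \<le> v i" "v \<noteq> (\<lambda>i. 0)" by (auto simp: atoms_def ZN_nonneg_def)
    hence "tot v > 0" using tot_pos ZN_D by blast
    thus False using False \<open>v \<in> L\<close> by auto
  qed
  then show ?thesis by simp
qed



lemma id_Sym: "id \<in> Sym"
  by (simp add: Sym_def bij_betw_id)

lemma act_ZN_nonneg: assumes "\<sigma> \<in> Sym" "v \<in> ZN_nonneg" shows "act \<sigma> v \<in> ZN_nonneg"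
proof -
  have v: "v \<in> ZN" "\<forall>i. 0 \<le> v i" using assms(2) by (auto simp: ZN_nonneg_def)
  have bj: "bij \<sigma>" using Sym_bij assms(1) by blast
  have i0: "inv \<sigma> 0 = 0" using Sym_inv[OF assms(1)] by (simp add: Sym_def)
  have "supp (act \<sigma> v) \<subseteq> \<sigma> ` supp v"
  proof
    fix x assume "x \<in> supp (act \<sigma> v)"
    hence "inv \<sigma> x \<in> supp v" by (simp add: supp_def act_def)
    moreover have "x = \<sigma> (inv \<sigma> x)" using bj by (simp add: bij_is_surj surj_f_inv_f)
    ultimately show "x \<in> \<sigma> ` supp v" by blast
  qed
  hence "finite (supp (act \<sigma> v))" using ZN_D[OF v(1)] finite_subset by blast
  moreover have "act \<sigma> v 0 = 0" using i0 ZN_D[OF v(1)] by (simp add: act_def)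
  ultimately have "act \<sigma> v \<in> ZN" using ZN_I by blast
  thus ?thesis using v(2) by (simp add: ZN_nonneg_def act_def)
qed

lemma act_M: assumes "\<sigma> \<in> Sym" "sym_invariant L" "v \<in> L \<inter> ZN_nonneg"
  shows "act \<sigma> v \<in> L \<inter> ZN_nonneg"
  using assms act_ZN_nonneg unfolding sym_invariant_def by blast

lemma act_zero[simp]: "act \<sigma> (\<lambda>i. 0) = (\<lambda>i. 0)" by (simp add: act_def)

lemma act_atom: assumes "\<sigma> \<in> Sym" "sym_invariant L" "v \<in> atoms (L \<inter> ZN_nonneg)"
  shows "act \<sigma> v \<in> atoms (L \<inter> ZN_nonneg)"
proof -
  let ?M = "L \<inter> ZN_nonneg"
  have vM: "v \<in> ?M" "v \<noteq> (\<lambda>i. 0)" and vat: "\<forall>w\<in>?M. (\<forall>i. w i \<le> v i) \<longrightarrow> w = (\<lambda>i. 0) \<or> w = v"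
    using assms(3) by (auto simp: atoms_def)
  have iS: "inv \<sigma> \<in> Sym" using Sym_inv[OF assms(1)] .
  have "act \<sigma> v \<in> ?M" using act_M assms vM by blast
  moreover have "act \<sigma> v \<noteq> (\<lambda>i. 0)"
  proof
    assume "act \<sigma> v = (\<lambda>i. 0)"
    hence "act (inv \<sigma>) (act \<sigma> v) = (\<lambda>i. 0)" by simp
    thus False using act_inv_act[OF assms(1)] vM by simp
  qed
  moreover have "\<forall>w\<in>?M. (\<forall>i. w i \<le> act \<sigma> v i) \<longrightarrow> w = (\<lambda>i. 0) \<or> w = act \<sigma> v"
  proof (intro ballI impI)
    fix w assume wM: "w \<in> ?M" and le: "\<forall>i. w i \<le> act \<sigma> v i"
    have w'M: "act (inv \<sigma>) w \<in> ?M" using act_M iS assms(2) wM by blast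
    have "\<forall>i. act (inv \<sigma>) w i \<le> act (inv \<sigma>) (act \<sigma> v) i" using le by (simp add: act_def)
    hence "\<forall>i. act (inv \<sigma>) w i \<le> v i" using act_inv_act[OF assms(1)] by simp
    hence "act (inv \<sigma>) w = (\<lambda>i. 0) \<or> act (inv \<sigma>) w = v" using vat w'M by blast
    hence "act \<sigma> (act (inv \<sigma>) w) = (\<lambda>i. 0) \<or> act \<sigma> (act (inv \<sigma>) w) = act \<sigma> v" by auto
    thus "w = (\<lambda>i. 0) \<or> w = act \<sigma> v" using act_act_inv[OF assms(1)] by simp
  qed
  ultimately show ?thesis by (simp add: atoms_def)
qed

lemma orbit_reduce:
  "v \<in> ZN \<Longrightarrow> card (supp v) \<le> n \<Longrightarrow> card (supp v \<inter> {n<..}) = k \<Longrightarrow> \<exists>\<sigma>\<in>Sym. \<forall>i>n. act \<sigma> v i = 0"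
proof (induction k arbitrary: v)
  case 0
  have fin: "finite (supp v)" using ZN_D[OF 0(1)] by simp
  hence "supp v \<inter> {n<..} = {}" using 0(3) by simp
  hence "\<forall>i>n. v i = 0" by (auto simp: supp_def)
  hence "\<forall>i>n. act id v i = 0" by (simp add: act_id)
  then show ?case using id_Sym by blast
next
  case (Suc k)
  have fin: "finite (supp v)" and v0: "v 0 = 0" using ZN_D[OF Suc.prems(1)] by auto
  have "supp v \<inter> {n<..} \<noteq> {}" using Suc.prems(3) by auto
  then obtain i where i: "i \<in> supp v" "i > n" by auto
  have n0: "0 \<notin> supp v" using v0 by (simp add: supp_def)
  have split: "supp v = (supp v \<inter> {1..n}) \<union> (supp v \<inter> {n<..})"
  proof
    show "supp v \<subseteq> (supp v \<inter> {1..n}) \<union> (supp v \<inter> {n<..})"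
    proof
      fix x assume x: "x \<in> supp v"
      have "x \<noteq> 0"
      proof
        assume "x = 0" thus False using x n0 by simp
      qed
      thus "x \<in> (supp v \<inter> {1..n}) \<union> (supp v \<inter> {n<..})" using x by auto
    qed
  qed auto
  have "card (supp v) = card (supp v \<inter> {1..n}) + card (supp v \<inter> {n<..})"
    by (subst split, rule card_Un_disjoint) (use fin in auto)
  hence lt: "card (supp v \<inter> {1..n}) < n" using Suc.prems by simp
  have "\<not> {1..n} \<subseteq> supp v"
  proof
    assume "{1..n} \<subseteq> supp v"
    hence "supp v \<inter> {1..n} = {1..n}" by blast
    thus False using lt by simp
  qed
  then obtain j where j: "j \<ge> 1" "j \<le> n" "v j = 0" by (auto simp: supp_def)
  have i1: "i \<ge> 1" using i by simp
  define v' where "v' = act (tr i j) v"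
  have v'x: "\<And>x. v' x = v (tr i j x)" by (simp add: v'_def act_tr)
  have sv': "supp v' = tr i j ` supp v"
  proof
    show "supp v' \<subseteq> tr i j ` supp v"
    proof
      fix x assume "x \<in> supp v'"
      hence "tr i j x \<in> supp v" by (simp add: supp_def v'x)
      moreover have "x = tr i j (tr i j x)" by simp
      ultimately show "x \<in> tr i j ` supp v" by blast
    qed
    show "tr i j ` supp v \<subseteq> supp v'"
      by (auto simp: supp_def v'x)
  qed
  have "inj_on (tr i j) (supp v)" using bij_tr bij_is_inj inj_on_subset by blast
  hence "card (tr i j ` supp v) = card (supp v)" by (rule card_image)
  hence c1: "card (supp v') = card (supp v)" using sv' by simp
  have "supp v' \<inter> {n<..} = (supp v \<inter> {n<..}) - {i}"
    using i j by (auto simp: supp_def v'x tr_def)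
  hence c2: "card (supp v' \<inter> {n<..}) = k" using Suc.prems(3) i fin by simp
  have "v' \<in> ZN"
  proof (rule ZN_I)
    show "v' 0 = 0" using v0 i1 j by (simp add: v'x tr_def)
    show "finite (supp v')" using sv' fin by simp
  qed
  hence "\<exists>\<sigma>\<in>Sym. \<forall>x>n. act \<sigma> v' x = 0" using Suc.IH c1 c2 Suc.prems(2) by simp
  then obtain \<sigma> where \<sigma>: "\<sigma> \<in> Sym" "\<forall>x>n. act \<sigma> v' x = 0" by blast
  have tS: "tr i j \<in> Sym" using tr_Sym i1 j by simp
  have "act \<sigma> v' = act (\<sigma> \<circ> tr i j) v" unfolding v'_def by (rule act_comp[OF tS \<sigma>(1)])
  moreover have "\<sigma> \<circ> tr i j \<in> Sym" using Sym_comp \<sigma>(1) tS by blast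
  ultimately have "\<sigma> \<circ> tr i j \<in> Sym" "\<forall>x>n. act (\<sigma> \<circ> tr i j) v x = 0" using \<sigma>(2) by simp_all
  thus ?case by blast
qed



lemma nn_span_zero: "(\<lambda>i. 0) \<in> nn_span B"
  unfolding nn_span_def by (rule CollectI, rule exI[of _ "{}"], rule exI[of _ "\<lambda>_. 0"]) simp

lemma nn_span_single: "b \<in> B \<Longrightarrow> b \<in> nn_span B"
  unfolding nn_span_def by (rule CollectI, rule exI[of _ "{b}"], rule exI[of _ "\<lambda>_. 1"]) simp

lemma nn_span_add: assumes "x \<in> nn_span B" "y \<in> nn_span B" shows "(\<lambda>i. x i + y i) \<in> nn_span B"
proof -
  obtain F1 c1 where 1: "finite F1" "F1 \<subseteq> B" "x = (\<lambda>i. \<Sum>b\<in>F1. int (c1 b) * b i)"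
    using assms(1) unfolding nn_span_def by blast
  obtain F2 c2 where 2: "finite F2" "F2 \<subseteq> B" "y = (\<lambda>i. \<Sum>b\<in>F2. int (c2 b) * b i)"
    using assms(2) unfolding nn_span_def by blast
  define F where "F = F1 \<union> F2"
  define c where "c = (\<lambda>b. (if b \<in> F1 then c1 b else 0) + (if b \<in> F2 then c2 b else 0))"
  have fF: "finite F" using 1 2 F_def by simp
  have e12: "F \<inter> F1 = F1" "F \<inter> F2 = F2" using F_def by auto
  have "(\<lambda>i. x i + y i) = (\<lambda>i. \<Sum>b\<in>F. int (c b) * b i)"
  proof
    fix i
    have "(\<Sum>b\<in>F. int (c b) * b i) = (\<Sum>b\<in>F. (if b \<in> F1 then int (c1 b) * b i else 0)) + (\<Sum>b\<in>F. (if b \<in> F2 then int (c2 b) * b i else 0))"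
      unfolding c_def sum.distrib[symmetric] by (intro sum.cong) (auto simp: algebra_simps)
    also have "\<dots> = (\<Sum>b\<in>F \<inter> F1. int (c1 b) * b i) + (\<Sum>b\<in>F \<inter> F2. int (c2 b) * b i)"
      using fF by (simp add: sum.inter_restrict)
    also have "\<dots> = x i + y i" using 1 2 e12 by simp
    finally show "x i + y i = (\<Sum>b\<in>F. int (c b) * b i)" by simp
  qed
  moreover have "F \<subseteq> B" using 1 2 F_def by simp
  ultimately show ?thesis using fF unfolding nn_span_def by blast
qed

lemma nn_span_sub: assumes "is_lattice L" "B \<subseteq> L \<inter> ZN_nonneg" shows "nn_span B \<subseteq> L \<inter> ZN_nonneg"
proof
  fix x assume "x \<in> nn_span B"
  then obtain F c where F: "finite F" "F \<subseteq> B" "x = (\<lambda>i. \<Sum>b\<in>F. int (c b) * b i)"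
    unfolding nn_span_def by blast
  have bL: "\<forall>b\<in>F. b \<in> L" and bZ: "\<forall>b\<in>F. b \<in> ZN" and bn: "\<forall>b\<in>F. \<forall>i. 0 \<le> b i"
    using F(2) assms(2) by (auto simp: ZN_nonneg_def)
  have "\<forall>b\<in>F. (\<lambda>i. int (c b) * b i) \<in> L" using lat_nat_mult[OF assms(1)] bL by blast
  from lat_sum[OF assms(1) F(1) this] have "x \<in> L" unfolding F(3) .
  moreover have "x \<in> ZN"
  proof (rule ZN_I)
    have "\<forall>b\<in>F. b 0 = 0" using bZ ZN_D by blast
    hence "(\<Sum>b\<in>F. int (c b) * b 0) = 0" by (intro sum.neutral) simp
    thus "x 0 = 0" unfolding F(3) by simp
    have "supp x \<subseteq> (\<Union>b\<in>F. supp b)"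
    proof
      fix i assume "i \<in> supp x"
      hence "(\<Sum>b\<in>F. int (c b) * b i) \<noteq> 0" by (simp add: supp_def F(3))
      hence "\<exists>b\<in>F. int (c b) * b i \<noteq> 0" by (meson sum.neutral)
      then obtain b where "b \<in> F" "int (c b) * b i \<noteq> 0" by blast
      thus "i \<in> (\<Union>b\<in>F. supp b)" by (auto simp: supp_def)
    qed
    moreover have "finite (\<Union>b\<in>F. supp b)" by (rule finite_UN_I[OF F(1)]) (use bZ ZN_D in blast)
    ultimately show "finite (supp x)" using finite_subset by blast
  qed
  moreover have "\<forall>i. 0 \<le> x i" unfolding F(3) using bn by (simp add: sum_nonneg)
  ultimately show "x \<in> L \<inter> ZN_nonneg" by (simp add: ZN_nonneg_def)
qed

lemma hb_generic: assumes "is_lattice L"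
  shows "hilbert_basis (L \<inter> ZN_nonneg) (atoms (L \<inter> ZN_nonneg))"
proof -
  let ?M = "L \<inter> ZN_nonneg"
  let ?A = "atoms ?M"
  have AM: "?A \<subseteq> ?M" by (auto simp: atoms_def)
  have Mdat: "\<And>v. v \<in> ?M \<Longrightarrow> v \<in> L \<and> v \<in> ZN \<and> (\<forall>i. 0 \<le> v i)" by (auto simp: ZN_nonneg_def)
  have main: "\<forall>v. v \<in> ?M \<longrightarrow> nat (tot v) = N \<longrightarrow> v \<in> nn_span ?A" for N
  proof (induction N rule: less_induct)
    case (less N)
    show ?case
    proof (intro allI impI)
      fix v assume vM: "v \<in> ?M" and vN: "nat (tot v) = N"
      show "v \<in> nn_span ?A"
      proof (cases "v = (\<lambda>i. 0)")
        case True then show ?thesis using nn_span_zero by simp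
      next
        case nz: False
        show ?thesis
        proof (cases "v \<in> ?A")
          case True then show ?thesis using nn_span_single by blast
        next
          case False
          then obtain w where wM: "w \<in> ?M" and wle: "\<forall>i. w i \<le> v i" and w0: "w \<noteq> (\<lambda>i. 0)" and wv: "w \<noteq> v"
            using vM nz unfolding atoms_def by blast
          define r where "r = (\<lambda>i. v i - w i)"
          have vd: "v \<in> L" "v \<in> ZN" "\<forall>i. 0 \<le> v i" using Mdat vM by auto
          have wd: "w \<in> L" "w \<in> ZN" "\<forall>i. 0 \<le> w i" using Mdat wM by auto
          have finv: "finite (supp v)" and finw: "finite (supp w)" using ZN_D vd wd by auto
          have rZ: "r \<in> ZN"
          proof (rule ZN_I)
            show "r 0 = 0" using ZN_D[OF vd(2)] ZN_D[OF wd(2)] by (simp add: r_def)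
            have "supp r \<subseteq> supp v \<union> supp w" by (auto simp: supp_def r_def)
            thus "finite (supp r)" using finv finw finite_subset by blast
          qed
          have rM: "r \<in> ?M" using lat_diff[OF assms vd(1) wd(1)] rZ wle
            by (auto simp: r_def ZN_nonneg_def)
          have r0: "r \<noteq> (\<lambda>i. 0)"
          proof
            assume "r = (\<lambda>i. 0)"
            hence "\<And>i. v i - w i = 0" unfolding r_def by metis
            hence "w = v" by (intro ext) (metis eq_iff_diff_eq_0)
            thus False using wv by simp
          qed
          have finr: "finite (supp r)" using ZN_D rZ by blast
          have tw: "tot w > 0" using tot_pos finw wd(3) w0 by blast
          have tr': "tot r > 0" using tot_pos finr rM r0 by (auto simp: ZN_nonneg_def)
          have vwr: "v = (\<lambda>i. w i + r i)" by (simp add: r_def)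
          have "tot v = tot w + tot r" using tot_add[OF finw finr] vwr by simp
          hence "nat (tot w) < N" "nat (tot r) < N" using tw tr' vN by auto
          hence "w \<in> nn_span ?A" "r \<in> nn_span ?A" using less.IH wM rM by simp_all
          hence "(\<lambda>i. w i + r i) \<in> nn_span ?A" by (rule nn_span_add)
          thus ?thesis using vwr by simp
        qed
      qed
    qed
  qed
  have span: "nn_span ?A = ?M"
  proof
    show "nn_span ?A \<subseteq> ?M" using nn_span_sub[OF assms AM] .
    show "?M \<subseteq> nn_span ?A" using main by blast
  qed
  have minimal: "\<forall>B'. B' \<subset> ?A \<longrightarrow> nn_span B' \<noteq> ?M"
  proof (intro allI impI)
    fix B' assume sub: "B' \<subset> ?A"
    show "nn_span B' \<noteq> ?M"
    proof
      assume eq: "nn_span B' = ?M"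
      obtain a where aA: "a \<in> ?A" and aB: "a \<notin> B'" using sub by blast
      have aM: "a \<in> ?M" and a0: "a \<noteq> (\<lambda>i. 0)"
        and aat: "\<forall>w\<in>?M. (\<forall>i. w i \<le> a i) \<longrightarrow> w = (\<lambda>i. 0) \<or> w = a"
        using aA by (auto simp: atoms_def)
      have "a \<in> nn_span B'" using eq aM by simp
      then obtain F c where F: "finite F" "F \<subseteq> B'" "a = (\<lambda>i. \<Sum>b\<in>F. int (c b) * b i)"
        unfolding nn_span_def by blast
      obtain i where "a i \<noteq> 0" using a0 by auto
      hence "(\<Sum>b\<in>F. int (c b) * b i) \<noteq> 0" using F(3) by simp
      hence "\<exists>b\<in>F. int (c b) * b i \<noteq> 0" by (meson sum.neutral)
      then obtain b where bF: "b \<in> F" and bi: "int (c b) * b i \<noteq> 0" by blast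
      have bM: "b \<in> ?M" using bF F(2) sub AM by blast
      have "F \<subseteq> ?M" using F(2) sub AM by blast
      hence nonneg: "\<forall>b'\<in>F. \<forall>k. 0 \<le> b' k" by (auto simp: ZN_nonneg_def)
      have cb: "c b \<ge> 1" using bi by (cases "c b") auto
      have "\<forall>k. b k \<le> a k"
      proof
        fix k
        have "a k = int (c b) * b k + (\<Sum>b'\<in>F - {b}. int (c b') * b' k)"
          using F(3) F(1) bF by (simp add: sum.remove)
        moreover have "(\<Sum>b'\<in>F - {b}. int (c b') * b' k) \<ge> 0" using nonneg by (auto intro!: sum_nonneg)
        moreover have "int (c b) * b k \<ge> b k"
        proof -
          have "b k \<ge> 0" using nonneg bF by blast
          moreover have "(1::int) \<le> int (c b)" using cb by simp
          ultimately show ?thesis using mult_right_mono[of 1 "int (c b)" "b k"] by simp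
        qed
        ultimately show "b k \<le> a k" by linarith
      qed
      hence "b = (\<lambda>i. 0) \<or> b = a" using aat bM by blast
      moreover have "b \<noteq> (\<lambda>i. 0)" using bi by auto
      ultimately have "b = a" by simp
      thus False using bF F(2) aB by blast
    qed
  qed
  show ?thesis unfolding hilbert_basis_def using AM span minimal by blast
qed

theorem lemma4p8:
  fixes L :: "(nat \<Rightarrow> int) set"
  assumes "is_lattice L" and "sym_invariant L"
  shows "\<exists>H. finite H \<and> equivariant_hilbert_basis (L \<inter> ZN_nonneg) H"
proof -
  let ?M = "L \<inter> ZN_nonneg"
  let ?A = "atoms ?M"
  obtain s :: nat where s: "\<forall>v\<in>?A. tot v \<le> int s" using atoms_bounded[OF assms] by blast
  define H where "H = {h \<in> ?A. \<forall>i>s. h i = 0}"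
  have Adat: "\<And>v. v \<in> ?A \<Longrightarrow> v \<in> ZN \<and> (\<forall>i. 0 \<le> v i) \<and> v \<in> ?M" by (auto simp: atoms_def ZN_nonneg_def)
  have "H \<subseteq> {f. \<forall>x. (x \<in> {..s} \<longrightarrow> f x \<in> {0..int s}) \<and> (x \<notin> {..s} \<longrightarrow> f x = 0)}"
  proof
    fix h assume hH: "h \<in> H"
    hence hA: "h \<in> ?A" and hz: "\<forall>i>s. h i = 0" by (auto simp: H_def)
    have "\<forall>x. 0 \<le> h x \<and> h x \<le> int s"
    proof
      fix x
      have "h x \<le> tot h" using entry_le_tot ZN_D Adat[OF hA] by blast
      thus "0 \<le> h x \<and> h x \<le> int s" using s hA Adat[OF hA] by force
    qed
    thus "h \<in> {f. \<forall>x. (x \<in> {..s} \<longrightarrow> f x \<in> {0..int s}) \<and> (x \<notin> {..s} \<longrightarrow> f x = 0)}" using hz by auto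
  qed
  hence finH: "finite H" using finite_set_of_finite_funs[of "{..s}" "{0..int s}" 0] finite_subset by blast
  have orb: "orbit_set H = ?A"
  proof
    show "orbit_set H \<subseteq> ?A"
    proof
      fix x assume "x \<in> orbit_set H"
      then obtain \<sigma> h where "x = act \<sigma> h" "\<sigma> \<in> Sym" "h \<in> H" unfolding orbit_set_def by blast
      moreover have "h \<in> ?A" using \<open>h \<in> H\<close> by (simp add: H_def)
      ultimately show "x \<in> ?A" using act_atom[OF _ assms(2)] by simp
    qed
    show "?A \<subseteq> orbit_set H"
    proof
      fix v assume vA: "v \<in> ?A"
      have vZ: "v \<in> ZN" and vn: "\<forall>i. 0 \<le> v i" using Adat[OF vA] by auto
      have "int (card (supp v)) \<le> tot v" using card_supp_le_tot ZN_D vZ vn by blast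
      hence "card (supp v) \<le> s" using s vA by force
      then obtain \<sigma> where \<sigma>: "\<sigma> \<in> Sym" "\<forall>i>s. act \<sigma> v i = 0" using orbit_reduce vZ by blast
      have "act \<sigma> v \<in> ?A" using act_atom[OF \<sigma>(1) assms(2) vA] .
      hence hH: "act \<sigma> v \<in> H" using \<sigma>(2) by (simp add: H_def)
      have "v = act (inv \<sigma>) (act \<sigma> v)" using act_inv_act[OF \<sigma>(1)] by simp
      moreover have "inv \<sigma> \<in> Sym" using Sym_inv[OF \<sigma>(1)] .
      ultimately show "v \<in> orbit_set H" unfolding orbit_set_def using hH by blast
    qed
  qed
  have "H \<subseteq> ?M" using Adat by (auto simp: H_def)
  hence "equivariant_hilbert_basis ?M H"
    unfolding equivariant_hilbert_basis_def using orb hb_generic[OF assms(1)] by simp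
  thus ?thesis using finH by blast
qed


end
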